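(* Let $G$ be a unit square graph. Then $G$ has no induced subgraph isomorphic to $K_{2,3}$, to $\overline{3K_2}$, or to $\overline{T_2}$.
   Context: A unit square graph is a graph $G$ admitting $f\colon V(G)\to\mathbb{R}^2$ with $vw\in E(G)$ iff $\|f(v)-f(w)\|_\infty\le1$ for distinct $v,w$. $\overline{H}$ denotes the complement of $H$; $3K_2$ is the disjoint union of three edges. $T_2$ is the tree on vertices $w_1,\dots,w_7$ with edges $w_1w_2, w_1w_4, w_1w_6, w_2w_3, w_4w_5, w_6w_7$ (a claw with each edge subdivided once). *)

theory Defs
  imports "HOL-Analysis.Analysis"
begin

definition simple_graph :: "'a set \<Rightarrow> ('a \<Rightarrow> 'a \<Rightarrow> bool) \<Rightarrow> bool" where
  "simple_graph V E \<longleftrightarrow>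
     (\<forall>v w. E v w \<longrightarrow> v \<in> V \<and> w \<in> V \<and> v \<noteq> w \<and> E w v)"

definition unit_square_graph :: "'a set \<Rightarrow> ('a \<Rightarrow> 'a \<Rightarrow> bool) \<Rightarrow> bool" where
  "unit_square_graph V E \<longleftrightarrow> simple_graph V E \<and>
     (\<exists>f :: 'a \<Rightarrow> real \<times> real. \<forall>v\<in>V. \<forall>w\<in>V. v \<noteq> w \<longrightarrow>
        (E v w \<longleftrightarrow> max \<bar>fst (f v) - fst (f w)\<bar> \<bar>snd (f v) - snd (f w)\<bar> \<le> 1))"

definition has_induced_subgraph ::
  "'a set \<Rightarrow> ('a \<Rightarrow> 'a \<Rightarrow> bool) \<Rightarrow> 'b set \<Rightarrow> ('b \<Rightarrow> 'b \<Rightarrow> bool) \<Rightarrow> bool" where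
  "has_induced_subgraph V E VH EH \<longleftrightarrow>
     (\<exists>\<phi>. inj_on \<phi> VH \<and> \<phi> ` VH \<subseteq> V \<and>
        (\<forall>u\<in>VH. \<forall>v\<in>VH. u \<noteq> v \<longrightarrow> (E (\<phi> u) (\<phi> v) \<longleftrightarrow> EH u v)))"

definition compl_graph :: "'a set \<Rightarrow> ('a \<Rightarrow> 'a \<Rightarrow> bool) \<Rightarrow> 'a \<Rightarrow> 'a \<Rightarrow> bool" where
  "compl_graph V E = (\<lambda>u v. u \<in> V \<and> v \<in> V \<and> u \<noteq> v \<and> \<not> E u v)"

definition K23_V :: "nat set" where "K23_V = {0..4}"
definition K23_E :: "nat \<Rightarrow> nat \<Rightarrow> bool" where
  "K23_E u v \<longleftrightarrow> u \<in> K23_V \<and> v \<in> K23_V \<and> ((u < 2 \<and> 2 \<le> v) \<or> (v < 2 \<and> 2 \<le> u))"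

definition threeK2_V :: "nat set" where "threeK2_V = {0..5}"
definition threeK2_E :: "nat \<Rightarrow> nat \<Rightarrow> bool" where
  "threeK2_E u v \<longleftrightarrow> {u, v} \<in> {{0,1}, {2,3}, {4,5}}"

definition T2_V :: "nat set" where "T2_V = {1..7}"
definition T2_E :: "nat \<Rightarrow> nat \<Rightarrow> bool" where
  "T2_E u v \<longleftrightarrow> {u, v} \<in> {{1,2}, {1,4}, {1,6}, {2,3}, {4,5}, {6,7}}"

end

theory Submission
  imports Defs
begin

definition A :: "real \<Rightarrow> real \<Rightarrow> real \<Rightarrow> real \<Rightarrow> bool" where
 "A a b c d \<longleftrightarrow> \<bar>a - c\<bar> \<le> 1 \<and> \<bar>b - d\<bar> \<le> 1"

lemma key:
  assumes "unit_square_graph V E" "has_induced_subgraph V E VH EH"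
  shows "\<exists>g :: 'b \<Rightarrow> real \<times> real. \<forall>i\<in>VH. \<forall>j\<in>VH. i \<noteq> j \<longrightarrow> (EH i j \<longleftrightarrow> A (fst (g i)) (snd (g i)) (fst (g j)) (snd (g j)))"
proof -
  obtain f :: "'a \<Rightarrow> real \<times> real" where f: "\<forall>v\<in>V. \<forall>w\<in>V. v \<noteq> w \<longrightarrow>
        (E v w \<longleftrightarrow> max \<bar>fst (f v) - fst (f w)\<bar> \<bar>snd (f v) - snd (f w)\<bar> \<le> 1)"
    using conjunct2[OF assms(1)[unfolded unit_square_graph_def]] ..
  obtain \<phi> where p0: "inj_on \<phi> VH \<and> \<phi> ` VH \<subseteq> V \<and>
     (\<forall>u\<in>VH. \<forall>v\<in>VH. u \<noteq> v \<longrightarrow> (E (\<phi> u) (\<phi> v) \<longleftrightarrow> EH u v))"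
    using assms(2)[unfolded has_induced_subgraph_def] ..
  note p = conjunct1[OF p0] conjunct1[OF conjunct2[OF p0]] conjunct2[OF conjunct2[OF p0]]
  show ?thesis
  proof (intro exI[of _ "f \<circ> \<phi>"] ballI impI)
    fix i j assume ij: "i \<in> VH" "j \<in> VH" "i \<noteq> j"
    have ne: "\<phi> i \<noteq> \<phi> j" using p(1) ij unfolding inj_on_def by blast
    have inV: "\<phi> i \<in> V" "\<phi> j \<in> V" using p(2) ij by blast+
    have e1: "E (\<phi> i) (\<phi> j) \<longleftrightarrow> EH i j" using p(3) ij by blast
    have e2: "E (\<phi> i) (\<phi> j) \<longleftrightarrow> max \<bar>fst (f (\<phi> i)) - fst (f (\<phi> j))\<bar> \<bar>snd (f (\<phi> i)) - snd (f (\<phi> j))\<bar> \<le> 1"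
      using f inV ne by blast
    show "EH i j \<longleftrightarrow> A (fst ((f \<circ> \<phi>) i)) (snd ((f \<circ> \<phi>) i)) (fst ((f \<circ> \<phi>) j)) (snd ((f \<circ> \<phi>) j))"
      using e1 e2 unfolding A_def comp_def by (simp only: max.bounded_iff)
  qed
qed

lemma K23_geo:
  shows "\<not> A x0 y0 x1 y1 \<Longrightarrow> A x0 y0 x2 y2 \<Longrightarrow> A x0 y0 x3 y3 \<Longrightarrow> A x0 y0 x4 y4 \<Longrightarrow> A x1 y1 x2 y2 \<Longrightarrow> A x1 y1 x3 y3 \<Longrightarrow> A x1 y1 x4 y4 \<Longrightarrow> \<not> A x2 y2 x3 y3 \<Longrightarrow> \<not> A x2 y2 x4 y4 \<Longrightarrow> \<not> A x3 y3 x4 y4 \<Longrightarrow> False"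
  unfolding A_def by (smt (z3))
lemma K23_no:
  assumes "unit_square_graph V E"
  shows "\<not> has_induced_subgraph V E K23_V (K23_E)"
proof
  assume hs: "has_induced_subgraph V E K23_V (K23_E)"
  obtain g where g: "\<forall>i\<in>K23_V. \<forall>j\<in>K23_V. i \<noteq> j \<longrightarrow> ((K23_E) i j \<longleftrightarrow> A (fst (g i)) (snd (g i)) (fst (g j)) (snd (g j)))"
    using key[OF assms hs] ..
  have h0: "\<not> A (fst (g 0)) (snd (g 0)) (fst (g 1)) (snd (g 1))" using g[rule_format, of 0 1] by (simp add: K23_V_def K23_E_def doubleton_eq_iff)
  have h1: "A (fst (g 0)) (snd (g 0)) (fst (g 2)) (snd (g 2))" using g[rule_format, of 0 2] by (simp add: K23_V_def K23_E_def doubleton_eq_iff)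
  have h2: "A (fst (g 0)) (snd (g 0)) (fst (g 3)) (snd (g 3))" using g[rule_format, of 0 3] by (simp add: K23_V_def K23_E_def doubleton_eq_iff)
  have h3: "A (fst (g 0)) (snd (g 0)) (fst (g 4)) (snd (g 4))" using g[rule_format, of 0 4] by (simp add: K23_V_def K23_E_def doubleton_eq_iff)
  have h4: "A (fst (g 1)) (snd (g 1)) (fst (g 2)) (snd (g 2))" using g[rule_format, of 1 2] by (simp add: K23_V_def K23_E_def doubleton_eq_iff)
  have h5: "A (fst (g 1)) (snd (g 1)) (fst (g 3)) (snd (g 3))" using g[rule_format, of 1 3] by (simp add: K23_V_def K23_E_def doubleton_eq_iff)
  have h6: "A (fst (g 1)) (snd (g 1)) (fst (g 4)) (snd (g 4))" using g[rule_format, of 1 4] by (simp add: K23_V_def K23_E_def doubleton_eq_iff)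
  have h7: "\<not> A (fst (g 2)) (snd (g 2)) (fst (g 3)) (snd (g 3))" using g[rule_format, of 2 3] by (simp add: K23_V_def K23_E_def doubleton_eq_iff)
  have h8: "\<not> A (fst (g 2)) (snd (g 2)) (fst (g 4)) (snd (g 4))" using g[rule_format, of 2 4] by (simp add: K23_V_def K23_E_def doubleton_eq_iff)
  have h9: "\<not> A (fst (g 3)) (snd (g 3)) (fst (g 4)) (snd (g 4))" using g[rule_format, of 3 4] by (simp add: K23_V_def K23_E_def doubleton_eq_iff)
  show False using K23_geo[OF h0 h1 h2 h3 h4 h5 h6 h7 h8 h9] .
qed

lemma TK_geo:
  shows "\<not> A x0 y0 x1 y1 \<Longrightarrow> A x0 y0 x2 y2 \<Longrightarrow> A x0 y0 x3 y3 \<Longrightarrow> A x0 y0 x4 y4 \<Longrightarrow> A x0 y0 x5 y5 \<Longrightarrow> A x1 y1 x2 y2 \<Longrightarrow> A x1 y1 x3 y3 \<Longrightarrow> A x1 y1 x4 y4 \<Longrightarrow> A x1 y1 x5 y5 \<Longrightarrow> \<not> A x2 y2 x3 y3 \<Longrightarrow> A x2 y2 x4 y4 \<Longrightarrow> A x2 y2 x5 y5 \<Longrightarrow> A x3 y3 x4 y4 \<Longrightarrow> A x3 y3 x5 y5 \<Longrightarrow> \<not> A x4 y4 x5 y5 \<Longrightarrow> False"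
  unfolding A_def by (smt (z3))
lemma TK_no:
  assumes "unit_square_graph V E"
  shows "\<not> has_induced_subgraph V E threeK2_V (compl_graph threeK2_V threeK2_E)"
proof
  assume hs: "has_induced_subgraph V E threeK2_V (compl_graph threeK2_V threeK2_E)"
  obtain g where g: "\<forall>i\<in>threeK2_V. \<forall>j\<in>threeK2_V. i \<noteq> j \<longrightarrow> ((compl_graph threeK2_V threeK2_E) i j \<longleftrightarrow> A (fst (g i)) (snd (g i)) (fst (g j)) (snd (g j)))"
    using key[OF assms hs] ..
  have h0: "\<not> A (fst (g 0)) (snd (g 0)) (fst (g 1)) (snd (g 1))" using g[rule_format, of 0 1] by (simp add: threeK2_V_def compl_graph_def threeK2_E_def doubleton_eq_iff)
  have h1: "A (fst (g 0)) (snd (g 0)) (fst (g 2)) (snd (g 2))" using g[rule_format, of 0 2] by (simp add: threeK2_V_def compl_graph_def threeK2_E_def doubleton_eq_iff)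
  have h2: "A (fst (g 0)) (snd (g 0)) (fst (g 3)) (snd (g 3))" using g[rule_format, of 0 3] by (simp add: threeK2_V_def compl_graph_def threeK2_E_def doubleton_eq_iff)
  have h3: "A (fst (g 0)) (snd (g 0)) (fst (g 4)) (snd (g 4))" using g[rule_format, of 0 4] by (simp add: threeK2_V_def compl_graph_def threeK2_E_def doubleton_eq_iff)
  have h4: "A (fst (g 0)) (snd (g 0)) (fst (g 5)) (snd (g 5))" using g[rule_format, of 0 5] by (simp add: threeK2_V_def compl_graph_def threeK2_E_def doubleton_eq_iff)
  have h5: "A (fst (g 1)) (snd (g 1)) (fst (g 2)) (snd (g 2))" using g[rule_format, of 1 2] by (simp add: threeK2_V_def compl_graph_def threeK2_E_def doubleton_eq_iff)
  have h6: "A (fst (g 1)) (snd (g 1)) (fst (g 3)) (snd (g 3))" using g[rule_format, of 1 3] by (simp add: threeK2_V_def compl_graph_def threeK2_E_def doubleton_eq_iff)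
  have h7: "A (fst (g 1)) (snd (g 1)) (fst (g 4)) (snd (g 4))" using g[rule_format, of 1 4] by (simp add: threeK2_V_def compl_graph_def threeK2_E_def doubleton_eq_iff)
  have h8: "A (fst (g 1)) (snd (g 1)) (fst (g 5)) (snd (g 5))" using g[rule_format, of 1 5] by (simp add: threeK2_V_def compl_graph_def threeK2_E_def doubleton_eq_iff)
  have h9: "\<not> A (fst (g 2)) (snd (g 2)) (fst (g 3)) (snd (g 3))" using g[rule_format, of 2 3] by (simp add: threeK2_V_def compl_graph_def threeK2_E_def doubleton_eq_iff)
  have h10: "A (fst (g 2)) (snd (g 2)) (fst (g 4)) (snd (g 4))" using g[rule_format, of 2 4] by (simp add: threeK2_V_def compl_graph_def threeK2_E_def doubleton_eq_iff)
  have h11: "A (fst (g 2)) (snd (g 2)) (fst (g 5)) (snd (g 5))" using g[rule_format, of 2 5] by (simp add: threeK2_V_def compl_graph_def threeK2_E_def doubleton_eq_iff)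
  have h12: "A (fst (g 3)) (snd (g 3)) (fst (g 4)) (snd (g 4))" using g[rule_format, of 3 4] by (simp add: threeK2_V_def compl_graph_def threeK2_E_def doubleton_eq_iff)
  have h13: "A (fst (g 3)) (snd (g 3)) (fst (g 5)) (snd (g 5))" using g[rule_format, of 3 5] by (simp add: threeK2_V_def compl_graph_def threeK2_E_def doubleton_eq_iff)
  have h14: "\<not> A (fst (g 4)) (snd (g 4)) (fst (g 5)) (snd (g 5))" using g[rule_format, of 4 5] by (simp add: threeK2_V_def compl_graph_def threeK2_E_def doubleton_eq_iff)
  show False using TK_geo[OF h0 h1 h2 h3 h4 h5 h6 h7 h8 h9 h10 h11 h12 h13 h14] .
qed

lemma T2_geo:
  shows "\<not> A x1 y1 x2 y2 \<Longrightarrow> A x1 y1 x3 y3 \<Longrightarrow> \<not> A x1 y1 x4 y4 \<Longrightarrow> A x1 y1 x5 y5 \<Longrightarrow> \<not> A x1 y1 x6 y6 \<Longrightarrow> A x1 y1 x7 y7 \<Longrightarrow> \<not> A x2 y2 x3 y3 \<Longrightarrow> A x2 y2 x4 y4 \<Longrightarrow> A x2 y2 x5 y5 \<Longrightarrow> A x2 y2 x6 y6 \<Longrightarrow> A x2 y2 x7 y7 \<Longrightarrow> A x3 y3 x4 y4 \<Longrightarrow> A x3 y3 x5 y5 \<Longrightarrow> A x3 y3 x6 y6 \<Longrightarrow> A x3 y3 x7 y7 \<Longrightarrow> \<not> A x4 y4 x5 y5 \<Longrightarrow> A x4 y4 x6 y6 \<Longrightarrow> A x4 y4 x7 y7 \<Longrightarrow>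 A x5 y5 x6 y6 \<Longrightarrow> A x5 y5 x7 y7 \<Longrightarrow> \<not> A x6 y6 x7 y7 \<Longrightarrow> False"
  unfolding A_def by (smt (z3))
lemma T2_no:
  assumes "unit_square_graph V E"
  shows "\<not> has_induced_subgraph V E T2_V (compl_graph T2_V T2_E)"
proof
  assume hs: "has_induced_subgraph V E T2_V (compl_graph T2_V T2_E)"
  obtain g where g: "\<forall>i\<in>T2_V. \<forall>j\<in>T2_V. i \<noteq> j \<longrightarrow> ((compl_graph T2_V T2_E) i j \<longleftrightarrow> A (fst (g i)) (snd (g i)) (fst (g j)) (snd (g j)))"
    using key[OF assms hs] ..
  have h0: "\<not> A (fst (g 1)) (snd (g 1)) (fst (g 2)) (snd (g 2))" using g[rule_format, of 1 2] by (simp add: T2_V_def compl_graph_def T2_E_def doubleton_eq_iff)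
  have h1: "A (fst (g 1)) (snd (g 1)) (fst (g 3)) (snd (g 3))" using g[rule_format, of 1 3] by (simp add: T2_V_def compl_graph_def T2_E_def doubleton_eq_iff)
  have h2: "\<not> A (fst (g 1)) (snd (g 1)) (fst (g 4)) (snd (g 4))" using g[rule_format, of 1 4] by (simp add: T2_V_def compl_graph_def T2_E_def doubleton_eq_iff)
  have h3: "A (fst (g 1)) (snd (g 1)) (fst (g 5)) (snd (g 5))" using g[rule_format, of 1 5] by (simp add: T2_V_def compl_graph_def T2_E_def doubleton_eq_iff)
  have h4: "\<not> A (fst (g 1)) (snd (g 1)) (fst (g 6)) (snd (g 6))" using g[rule_format, of 1 6] by (simp add: T2_V_def compl_graph_def T2_E_def doubleton_eq_iff)
  have h5: "A (fst (g 1)) (snd (g 1)) (fst (g 7)) (snd (g 7))" using g[rule_format, of 1 7] by (simp add: T2_V_def compl_graph_def T2_E_def doubleton_eq_iff)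
  have h6: "\<not> A (fst (g 2)) (snd (g 2)) (fst (g 3)) (snd (g 3))" using g[rule_format, of 2 3] by (simp add: T2_V_def compl_graph_def T2_E_def doubleton_eq_iff)
  have h7: "A (fst (g 2)) (snd (g 2)) (fst (g 4)) (snd (g 4))" using g[rule_format, of 2 4] by (simp add: T2_V_def compl_graph_def T2_E_def doubleton_eq_iff)
  have h8: "A (fst (g 2)) (snd (g 2)) (fst (g 5)) (snd (g 5))" using g[rule_format, of 2 5] by (simp add: T2_V_def compl_graph_def T2_E_def doubleton_eq_iff)
  have h9: "A (fst (g 2)) (snd (g 2)) (fst (g 6)) (snd (g 6))" using g[rule_format, of 2 6] by (simp add: T2_V_def compl_graph_def T2_E_def doubleton_eq_iff)
  have h10: "A (fst (g 2)) (snd (g 2)) (fst (g 7)) (snd (g 7))" using g[rule_format, of 2 7] by (simp add: T2_V_def compl_graph_def T2_E_def doubleton_eq_iff)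
  have h11: "A (fst (g 3)) (snd (g 3)) (fst (g 4)) (snd (g 4))" using g[rule_format, of 3 4] by (simp add: T2_V_def compl_graph_def T2_E_def doubleton_eq_iff)
  have h12: "A (fst (g 3)) (snd (g 3)) (fst (g 5)) (snd (g 5))" using g[rule_format, of 3 5] by (simp add: T2_V_def compl_graph_def T2_E_def doubleton_eq_iff)
  have h13: "A (fst (g 3)) (snd (g 3)) (fst (g 6)) (snd (g 6))" using g[rule_format, of 3 6] by (simp add: T2_V_def compl_graph_def T2_E_def doubleton_eq_iff)
  have h14: "A (fst (g 3)) (snd (g 3)) (fst (g 7)) (snd (g 7))" using g[rule_format, of 3 7] by (simp add: T2_V_def compl_graph_def T2_E_def doubleton_eq_iff)
  have h15: "\<not> A (fst (g 4)) (snd (g 4)) (fst (g 5)) (snd (g 5))" using g[rule_format, of 4 5] by (simp add: T2_V_def compl_graph_def T2_E_def doubleton_eq_iff)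
  have h16: "A (fst (g 4)) (snd (g 4)) (fst (g 6)) (snd (g 6))" using g[rule_format, of 4 6] by (simp add: T2_V_def compl_graph_def T2_E_def doubleton_eq_iff)
  have h17: "A (fst (g 4)) (snd (g 4)) (fst (g 7)) (snd (g 7))" using g[rule_format, of 4 7] by (simp add: T2_V_def compl_graph_def T2_E_def doubleton_eq_iff)
  have h18: "A (fst (g 5)) (snd (g 5)) (fst (g 6)) (snd (g 6))" using g[rule_format, of 5 6] by (simp add: T2_V_def compl_graph_def T2_E_def doubleton_eq_iff)
  have h19: "A (fst (g 5)) (snd (g 5)) (fst (g 7)) (snd (g 7))" using g[rule_format, of 5 7] by (simp add: T2_V_def compl_graph_def T2_E_def doubleton_eq_iff)
  have h20: "\<not> A (fst (g 6)) (snd (g 6)) (fst (g 7)) (snd (g 7))" using g[rule_format, of 6 7] by (simp add: T2_V_def compl_graph_def T2_E_def doubleton_eq_iff)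
  show False using T2_geo[OF h0 h1 h2 h3 h4 h5 h6 h7 h8 h9 h10 h11 h12 h13 h14 h15 h16 h17 h18 h19 h20] .
qed

theorem mainTheorem7:
  fixes V :: "'a set" and E :: "'a \<Rightarrow> 'a \<Rightarrow> bool"
  assumes "unit_square_graph V E"
  shows "\<not> has_induced_subgraph V E K23_V K23_E \<and>
         \<not> has_induced_subgraph V E threeK2_V (compl_graph threeK2_V threeK2_E) \<and>
         \<not> has_induced_subgraph V E T2_V (compl_graph T2_V T2_E)"
  using K23_no[OF assms] TK_no[OF assms] T2_no[OF assms] by blast

end
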